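(* Let $t\ge 3$ and let $\mathcal{H}$ be an $n$-vertex $3$-uniform hypergraph that does not contain $K_{2,t}$ as a trace. Let $A$ be the set of edges of $\mathcal{H}$ containing at least one pair of vertices whose co-degree in $\mathcal{H}$ is $1$, and let $B=\mathcal{H}\setminus A$; for a vertex $x$ let $d(x)$ be the number of edges of $B$ containing $x$. For a vertex $x$, let $N_1(x)=\{z: \exists e\in B,\ \{x,z\}\subseteq e\}$ and $N_2(x)=\{z\notin N_1(x)\cup\{x\}: \exists e\in B,\ z\in e,\ e\cap N_1(x)\neq\emptyset\}$. Fix a vertex $v$, and for $u\in N_1(v)$ let $E_u=\{e\in B: e\cap N_1(v)=\{u\}\}$ and $V_u=\{w\in N_2(v): \exists e\in E_u,\ w\in e\}$. Then for all $u\in N_1(v)$, $$|V_u|\ge \frac{2}{3t-3}\left(d(u)-(3t-3)-3(t-1)^2(6t-2)\right).$$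
   Context: A hypergraph $\mathcal{H}$ contains a graph $F$ (vertices $v_1,\dots,v_p$, edges $e_1,\dots,e_q$) as a trace if there exist distinct vertices $w_1,\dots,w_p\in V(\mathcal{H})$ and distinct edges $f_1,\dots,f_q\in E(\mathcal{H})$ such that whenever $e_i=v_\alpha v_\beta$, $f_i\cap\{w_1,\dots,w_p\}=\{w_\alpha,w_\beta\}$. The co-degree of a pair $\{x,y\}$ in $\mathcal{H}$ is the number of edges of $\mathcal{H}$ containing $\{x,y\}$. $\mathcal{H}\setminus A$ denotes the hypergraph on $V(\mathcal{H})$ with edge set $E(\mathcal{H})\setminus A$. *)

theory Defs
  imports Complex_Main
begin

definition uniform3 :: "'a set \<Rightarrow> 'a set set \<Rightarrow> bool" where
  "uniform3 V H \<longleftrightarrow> finite V \<and> (\<forall>e\<in>H. e \<subseteq> V \<and> card e = 3)"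

definition contains_trace :: "'a set \<Rightarrow> 'a set set \<Rightarrow> 'b set \<Rightarrow> 'b set set \<Rightarrow> bool" where
  "contains_trace V H VF EF \<longleftrightarrow>
     (\<exists>w f. inj_on w VF \<and> w ` VF \<subseteq> V \<and> inj_on f EF \<and> f ` EF \<subseteq> H \<and>
            (\<forall>e\<in>EF. f e \<inter> w ` VF = w ` e))"

text \<open>K_{2,t}: parts {0,1} and {2,...,t+1}.\<close>
definition K2t_verts :: "nat \<Rightarrow> nat set" where
  "K2t_verts t = {0..<t+2}"

definition K2t_edges :: "nat \<Rightarrow> nat set set" where
  "K2t_edges t = {{i, j} | i j. i < 2 \<and> 2 \<le> j \<and> j < t + 2}"

definition codegree :: "'a set set \<Rightarrow> 'a \<Rightarrow> 'a \<Rightarrow> nat" where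
  "codegree H x y = card {e\<in>H. {x, y} \<subseteq> e}"

definition edgesA :: "'a set set \<Rightarrow> 'a set set" where
  "edgesA H = {e\<in>H. \<exists>x y. x \<noteq> y \<and> {x, y} \<subseteq> e \<and> codegree H x y = 1}"

definition edgesB :: "'a set set \<Rightarrow> 'a set set" where
  "edgesB H = H - edgesA H"

definition degB :: "'a set set \<Rightarrow> 'a \<Rightarrow> nat" where
  "degB H x = card {e\<in>edgesB H. x \<in> e}"

definition N1 :: "'a set set \<Rightarrow> 'a \<Rightarrow> 'a set" where
  "N1 H x = {z. z \<noteq> x \<and> (\<exists>e\<in>edgesB H. {x, z} \<subseteq> e)}"

definition N2 :: "'a set set \<Rightarrow> 'a \<Rightarrow> 'a set" where
  "N2 H x = {z. z \<notin> N1 H x \<union> {x} \<and> (\<exists>e\<in>edgesB H. z \<in> e \<and> e \<inter> N1 H x \<noteq> {})}"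

definition Eu :: "'a set set \<Rightarrow> 'a \<Rightarrow> 'a \<Rightarrow> 'a set set" where
  "Eu H v u = {e\<in>edgesB H. e \<inter> N1 H v = {u}}"

definition Vu :: "'a set set \<Rightarrow> 'a \<Rightarrow> 'a \<Rightarrow> 'a set" where
  "Vu H v u = {w\<in>N2 H v. \<exists>e\<in>Eu H v u. w \<in> e}"

end

theory Submission
  imports Defs
begin

definition pend :: "('a \<Rightarrow> 'a set) \<Rightarrow> 'a set \<Rightarrow> 'a \<Rightarrow> 'a set" where
 "pend P Y y = {s\<in>Y. s \<noteq> y \<and> P s - {s} \<subseteq> {y}}"

lemma pend_count:
  assumes fin: "finite Y" and val: "\<forall>y\<in>Y. P y - {y} \<noteq> {}"
    and sym: "\<forall>y\<in>Y. \<forall>z\<in>Y. z \<in> P y \<longleftrightarrow> y \<in> P z"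
  shows "3 * card {y\<in>Y. 2 \<le> card (pend P Y y)} \<le> card Y"
proof -
  define X where "X = {y\<in>Y. 2 \<le> card (pend P Y y)}"
  have finX: "finite X" using fin unfolding X_def by simp
  have XY: "X \<subseteq> Y" unfolding X_def by auto
  have finp: "\<forall>y\<in>X. finite (pend P Y y)" using fin unfolding pend_def by auto
  have disj: "\<forall>y\<in>X. \<forall>y'\<in>X. y \<noteq> y' \<longrightarrow> pend P Y y \<inter> pend P Y y' = {}"
  proof (intro ballI impI)
    fix y y' assume "y\<in>X" "y'\<in>X" "y\<noteq>y'"
    show "pend P Y y \<inter> pend P Y y' = {}"
    proof (rule ccontr)
      assume "pend P Y y \<inter> pend P Y y' \<noteq> {}"
      then obtain s where s: "s \<in> pend P Y y" "s \<in> pend P Y y'" by blast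
      hence "s\<in>Y" "P s - {s} \<subseteq> {y}" "P s - {s} \<subseteq> {y'}" unfolding pend_def by auto
      with val \<open>y\<noteq>y'\<close> show False by blast
    qed
  qed
  have sub: "(\<Union>y\<in>X. pend P Y y) \<subseteq> Y - X"
  proof
    fix s assume "s \<in> (\<Union>y\<in>X. pend P Y y)"
    then obtain y where y: "y\<in>X" "s \<in> pend P Y y" by blast
    hence sY: "s\<in>Y" and sy: "s\<noteq>y" and Ps: "P s - {s} \<subseteq> {y}" unfolding pend_def by auto
    have "s \<notin> X"
    proof
      assume "s\<in>X"
      hence c2: "2 \<le> card (pend P Y s)" unfolding X_def by simp
      have "pend P Y s \<subseteq> {y}"
      proof
        fix s1 assume s1: "s1 \<in> pend P Y s"
        hence s1Y: "s1 \<in> Y" and "s1 \<noteq> s" and "P s1 - {s1} \<subseteq> {s}" unfolding pend_def by auto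
        moreover have "P s1 - {s1} \<noteq> {}" using val s1Y by blast
        ultimately have "s \<in> P s1" by blast
        hence "s1 \<in> P s" using sym sY s1Y by blast
        with \<open>s1 \<noteq> s\<close> Ps show "s1 \<in> {y}" by blast
      qed
      hence "card (pend P Y s) \<le> 1" using card_mono[of "{y}" "pend P Y s"] by simp
      with c2 show False by simp
    qed
    thus "s \<in> Y - X" using sY by simp
  qed
  have "2 * card X = (\<Sum>y\<in>X. 2)" by simp
  also have "\<dots> \<le> (\<Sum>y\<in>X. card (pend P Y y))" by (rule sum_mono) (simp add: X_def)
  also have "\<dots> = card (\<Union>y\<in>X. pend P Y y)" by (rule card_UN_disjoint[symmetric]) (use finX finp disj in auto)
  also have "\<dots> \<le> card (Y - X)" by (rule card_mono) (use fin sub in auto)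
  also have "\<dots> = card Y - card X" using XY finX by (simp add: card_Diff_subset)
  finally show ?thesis unfolding X_def[symmetric] by simp
qed

lemma exists_good:
  assumes fin: "finite Y" and ne: "Y \<noteq> {}"
    and valP: "\<forall>y\<in>Y. P y - {y} \<noteq> {}" and symP: "\<forall>y\<in>Y. \<forall>z\<in>Y. z \<in> P y \<longleftrightarrow> y \<in> P z"
    and valQ: "\<forall>y\<in>Y. Q y - {y} \<noteq> {}" and symQ: "\<forall>y\<in>Y. \<forall>z\<in>Y. z \<in> Q y \<longleftrightarrow> y \<in> Q z"
  shows "\<exists>y\<in>Y. card (pend P Y y) \<le> 1 \<and> card (pend Q Y y) \<le> 1"
proof (rule ccontr)
  assume "\<not> ?thesis"
  hence "Y \<subseteq> {y\<in>Y. 2 \<le> card (pend P Y y)} \<union> {y\<in>Y. 2 \<le> card (pend Q Y y)}" by auto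
  hence "card Y \<le> card {y\<in>Y. 2 \<le> card (pend P Y y)} + card {y\<in>Y. 2 \<le> card (pend Q Y y)}"
    using card_mono[OF _ \<open>Y \<subseteq> _\<close>] card_Un_le fin le_trans by (metis (no_types, lifting) finite_Un mem_Collect_eq finite_subset subsetI)
  moreover have "3 * card {y\<in>Y. 2 \<le> card (pend P Y y)} \<le> card Y" by (rule pend_count[OF fin valP symP])
  moreover have "3 * card {y\<in>Y. 2 \<le> card (pend Q Y y)} \<le> card Y" by (rule pend_count[OF fin valQ symQ])
  moreover have "card Y > 0" using fin ne by auto
  ultimately show False by linarith
qed

lemma select:
  assumes "finite Y"
    and "\<forall>y\<in>Y. P y - {y} \<noteq> {}" and "\<forall>y\<in>Y. \<forall>z\<in>Y. z \<in> P y \<longleftrightarrow> y \<in> P z"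
    and "\<forall>y\<in>Y. Q y - {y} \<noteq> {}" and "\<forall>y\<in>Y. \<forall>z\<in>Y. z \<in> Q y \<longleftrightarrow> y \<in> Q z"
    and "3 * t \<le> card Y + 2"
  shows "\<exists>S\<subseteq>Y. card S = t \<and> (\<forall>s\<in>S. P s - S \<noteq> {} \<and> Q s - S \<noteq> {})"
  using assms
proof (induction t arbitrary: Y P Q)
  case 0
  then show ?case by (intro exI[of _ "{}"]) auto
next
  case (Suc t)
  note fin = Suc.prems(1) and valP = Suc.prems(2) and symP = Suc.prems(3)
    and valQ = Suc.prems(4) and symQ = Suc.prems(5)
  have "Y \<noteq> {}" using Suc.prems(6) by auto
  then obtain y where yY: "y\<in>Y" and cp: "card (pend P Y y) \<le> 1" and cq: "card (pend Q Y y) \<le> 1"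
    using exists_good[OF fin _ valP symP valQ symQ] by blast
  have pendin: "pend R Y y \<subseteq> R y - {y}" if valR: "\<forall>y\<in>Y. R y - {y} \<noteq> {}"
    and symR: "\<forall>y\<in>Y. \<forall>z\<in>Y. z \<in> R y \<longleftrightarrow> y \<in> R z" for R
  proof
    fix s assume "s \<in> pend R Y y"
    hence sY: "s\<in>Y" and "s\<noteq>y" and "R s - {s} \<subseteq> {y}" unfolding pend_def by auto
    moreover have "R s - {s} \<noteq> {}" using valR sY by blast
    ultimately have "y \<in> R s" by blast
    thus "s \<in> R y - {y}" using symR sY yY \<open>s\<noteq>y\<close> by blast
  qed
  have choose: "\<exists>a. a \<in> R y - {y} \<and> pend R Y y \<subseteq> {a}" if valR: "\<forall>y\<in>Y. R y - {y} \<noteq> {}"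
    and symR: "\<forall>y\<in>Y. \<forall>z\<in>Y. z \<in> R y \<longleftrightarrow> y \<in> R z" and cR: "card (pend R Y y) \<le> 1" for R
  proof (cases "pend R Y y = {}")
    case True
    then show ?thesis using valR yY by blast
  next
    case False
    have "finite (pend R Y y)" using fin unfolding pend_def by auto
    then obtain a where "pend R Y y = {a}" using False cR
      by (metis One_nat_def card_1_singletonE card_0_eq le_SucE le_zero_eq)
    then show ?thesis using pendin[OF valR symR] by blast
  qed
  obtain a where a: "a \<in> P y - {y}" "pend P Y y \<subseteq> {a}" using choose[OF valP symP cp] by blast
  obtain b where b: "b \<in> Q y - {y}" "pend Q Y y \<subseteq> {b}" using choose[OF valQ symQ cq] by blast
  define Y' where "Y' = Y - {y,a,b}"
  have finY': "finite Y'" using fin unfolding Y'_def by auto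
  have "card Y \<le> card Y' + card {y,a,b}"
  proof -
    have "Y \<subseteq> Y' \<union> {y,a,b}" unfolding Y'_def by auto
    hence "card Y \<le> card (Y' \<union> {y,a,b})" using finY' by (intro card_mono) auto
    also have "\<dots> \<le> card Y' + card {y,a,b}" by (rule card_Un_le)
    finally show ?thesis .
  qed
  moreover have "card {y,a,b} \<le> 3" by (simp add: card_insert_le_m1)
  ultimately have cY': "3 * t \<le> card Y' + 2" using Suc.prems(6) by (simp only: mult_Suc_right)
  have valP': "\<forall>z\<in>Y'. (\<lambda>x. P x - {y}) z - {z} \<noteq> {}"
  proof
    fix z assume z: "z \<in> Y'"
    show "(\<lambda>x. P x - {y}) z - {z} \<noteq> {}"
    proof
      assume "(\<lambda>x. P x - {y}) z - {z} = {}"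
      hence "z \<in> pend P Y y" using z unfolding Y'_def pend_def by auto
      thus False using a z unfolding Y'_def by auto
    qed
  qed
  have valQ': "\<forall>z\<in>Y'. (\<lambda>x. Q x - {y}) z - {z} \<noteq> {}"
  proof
    fix z assume z: "z \<in> Y'"
    show "(\<lambda>x. Q x - {y}) z - {z} \<noteq> {}"
    proof
      assume "(\<lambda>x. Q x - {y}) z - {z} = {}"
      hence "z \<in> pend Q Y y" using z unfolding Y'_def pend_def by auto
      thus False using b z unfolding Y'_def by auto
    qed
  qed
  have symP': "\<forall>x\<in>Y'. \<forall>z\<in>Y'. z \<in> (\<lambda>x. P x - {y}) x \<longleftrightarrow> x \<in> (\<lambda>x. P x - {y}) z"
    using symP unfolding Y'_def by auto
  have symQ': "\<forall>x\<in>Y'. \<forall>z\<in>Y'. z \<in> (\<lambda>x. Q x - {y}) x \<longleftrightarrow> x \<in> (\<lambda>x. Q x - {y}) z"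
    using symQ unfolding Y'_def by auto
  obtain S' where S': "S' \<subseteq> Y'" "card S' = t"
    "\<forall>s\<in>S'. (P s - {y}) - S' \<noteq> {} \<and> (Q s - {y}) - S' \<noteq> {}"
    using Suc.IH[OF finY' valP' symP' valQ' symQ' cY'] by auto
  have yS': "y \<notin> S'" using S'(1) unfolding Y'_def by auto
  have finS': "finite S'" using S'(1) finY' finite_subset by auto
  show ?case
  proof (intro exI[of _ "insert y S'"] conjI ballI)
    show "insert y S' \<subseteq> Y" using yY S'(1) unfolding Y'_def by auto
    show "card (insert y S') = Suc t" using yS' finS' S'(2) by simp
    fix s assume s: "s \<in> insert y S'"
    show "P s - insert y S' \<noteq> {}"
    proof (cases "s = y")
      case True
      have "a \<notin> insert y S'" using a S'(1) unfolding Y'_def by auto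
      then show ?thesis using a True by blast
    next
      case False
      then show ?thesis using s S'(3) by auto
    qed
    show "Q s - insert y S' \<noteq> {}"
    proof (cases "s = y")
      case True
      have "b \<notin> insert y S'" using b S'(1) unfolding Y'_def by auto
      then show ?thesis using b True by blast
    next
      case False
      then show ?thesis using s S'(3) by auto
    qed
  qed
qed


definition CN :: "'a set set \<Rightarrow> 'a \<Rightarrow> 'a \<Rightarrow> 'a set" where
 "CN H a b = {z. z \<noteq> a \<and> z \<noteq> b \<and> (\<exists>f\<in>H. a \<in> f \<and> z \<in> f \<and> b \<notin> f) \<and> (\<exists>g\<in>H. b \<in> g \<and> z \<in> g \<and> a \<notin> g)}"

lemma CN_sym: "CN H a b = CN H b a" unfolding CN_def by blast

lemma three_eq:
  assumes "card f = 3" "a \<in> f" "b \<in> f" "c \<in> f" "a \<noteq> b" "a \<noteq> c" "b \<noteq> c"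
  shows "f = {a,b,c}"
proof -
  have "finite f" using assms(1) by (metis card.infinite zero_neq_numeral)
  moreover have "{a,b,c} \<subseteq> f" using assms by auto
  moreover have "card {a,b,c} = 3" using assms by auto
  ultimately show ?thesis using assms(1) by (metis card_subset_eq)
qed

lemma three_other:
  assumes "card f = 3" "a \<in> f" "b \<in> f"
  shows "\<exists>x\<in>f. x \<noteq> a \<and> x \<noteq> b"
proof (rule ccontr)
  assume "\<not> ?thesis"
  hence "f \<subseteq> {a,b}" by auto
  hence "card f \<le> card {a,b}" by (intro card_mono) auto
  also have "\<dots> \<le> 2" by (simp add: card_insert_le_m1)
  finally show False using assms(1) by simp
qed

lemma build_trace:
  assumes u3: "uniform3 V H" and ab: "a \<noteq> b" and aV: "a\<in>V" and bV: "b\<in>V"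
    and finS: "finite S" and SV: "S \<subseteq> V" and cS: "card S = t" and aS: "a\<notin>S" and bS: "b\<notin>S"
    and FA: "\<forall>s\<in>S. \<exists>f\<in>H. f \<inter> ({a,b} \<union> S) = {a,s}"
    and FB: "\<forall>s\<in>S. \<exists>g\<in>H. g \<inter> ({a,b} \<union> S) = {b,s}"
  shows "contains_trace V H (K2t_verts t) (K2t_edges t)"
proof -
  obtain g where g: "bij_betw g {0..<t} S" using ex_bij_betw_nat_finite[OF finS] cS by auto
  define w where "w i = (if i = 0 then a else if i = Suc 0 then b else g (i - 2))" for i :: nat
  define W where "W = {a,b} \<union> S"
  define FX where "FX c s = (SOME f. f\<in>H \<and> f \<inter> W = {c,s})" for c s
  have FX: "FX c s \<in> H \<and> FX c s \<inter> W = {c,s}" if "c = a \<or> c = b" "s \<in> S" for c s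
  proof -
    have "\<exists>f. f\<in>H \<and> f \<inter> W = {c,s}" using FA FB that unfolding W_def by blast
    thus ?thesis unfolding FX_def by (rule someI_ex)
  qed
  define fe where "fe e = FX (if (0::nat) \<in> e then a else b) (g (Max e - 2))" for e
  have gS: "g i \<in> S" if "i < t" for i using g that unfolding bij_betw_def by auto
  have wimg: "w ` K2t_verts t = W"
  proof
    show "w ` K2t_verts t \<subseteq> W" unfolding K2t_verts_def W_def w_def using gS by auto
    show "W \<subseteq> w ` K2t_verts t"
    proof
      fix x assume "x \<in> W"
      then consider "x = a" | "x = b" | "x \<in> S" unfolding W_def by auto
      then show "x \<in> w ` K2t_verts t"
      proof cases
        case 1 then show ?thesis unfolding K2t_verts_def w_def by (intro image_eqI[of _ _ 0]) auto
      next
        case 2 then show ?thesis unfolding K2t_verts_def w_def using ab by (intro image_eqI[of _ _ 1]) auto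
      next
        case 3
        then obtain k where k: "k < t" "x = g k" using g unfolding bij_betw_def by auto
        then show ?thesis unfolding K2t_verts_def w_def by (intro image_eqI[of _ _ "k+2"]) auto
      qed
    qed
  qed
  have injw: "inj_on w (K2t_verts t)"
  proof (rule inj_onI)
    fix i j assume i: "i \<in> K2t_verts t" and j: "j \<in> K2t_verts t" and eq: "w i = w j"
    have gi: "inj_on g {0..<t}" using g unfolding bij_betw_def by auto
    show "i = j"
    proof (cases "i < 2")
      case True
      then show ?thesis
        using eq ab aS bS gS j unfolding w_def K2t_verts_def
        by (cases "j < 2") (auto split: if_splits)
    next
      case False
      hence wi: "w i = g (i - 2)" "i - 2 < t" using i unfolding w_def K2t_verts_def by auto
      show ?thesis
      proof (cases "j < 2")
        case True
        then show ?thesis using eq wi gS aS bS unfolding w_def by (auto split: if_splits)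
      next
        case False
        hence "w j = g (j - 2)" "j - 2 < t" using j unfolding w_def K2t_verts_def by auto
        with wi eq gi have "i - 2 = j - 2" by (auto dest: inj_onD)
        with False \<open>\<not> i < 2\<close> show ?thesis by simp
      qed
    qed
  qed
  have feprop: "fe e \<in> H \<and> fe e \<inter> W = w ` e" if e: "e \<in> K2t_edges t" for e
  proof -
    obtain i j where ij: "e = {i,j}" "i < 2" "2 \<le> j" "j < t+2" using e unfolding K2t_edges_def by auto
    have Me: "Max e = j" using ij by auto
    have gj: "g (j - 2) \<in> S" using gS ij by auto
    have wj: "w j = g (j - 2)" using ij unfolding w_def by auto
    show ?thesis
    proof (cases "i = 0")
      case True
      hence "fe e = FX a (g (j-2))" unfolding fe_def using Me ij by auto
      then show ?thesis using FX[of a "g (j-2)"] gj wj True ij by (auto simp: w_def)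
    next
      case False
      hence i1: "i = 1" using ij by auto
      hence "0 \<notin> e" using ij by auto
      hence "fe e = FX b (g (j-2))" unfolding fe_def using Me by auto
      then show ?thesis using FX[of b "g (j-2)"] gj wj i1 ij by (auto simp: w_def)
    qed
  qed
  have injf: "inj_on fe (K2t_edges t)"
  proof (rule inj_onI)
    fix e e' assume e: "e \<in> K2t_edges t" and e': "e' \<in> K2t_edges t" and eq: "fe e = fe e'"
    have "w ` e = w ` e'" using feprop[OF e] feprop[OF e'] eq by simp
    moreover have "e \<subseteq> K2t_verts t" "e' \<subseteq> K2t_verts t"
      using e e' unfolding K2t_edges_def K2t_verts_def by auto
    ultimately show "e = e'" using injw by (simp add: inj_on_image_eq_iff)
  qed
  have "w ` K2t_verts t \<subseteq> V" using wimg aV bV SV unfolding W_def by auto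
  moreover have "fe ` K2t_edges t \<subseteq> H" using feprop by auto
  moreover have "\<forall>e\<in>K2t_edges t. fe e \<inter> w ` K2t_verts t = w ` e" using feprop wimg by auto
  ultimately show ?thesis unfolding contains_trace_def using injw injf by blast
qed

lemma CN_bound:
  assumes u3: "uniform3 V H" and nt: "\<not> contains_trace V H (K2t_verts t) (K2t_edges t)"
    and ab: "a \<noteq> b" and t1: "1 \<le> t"
  shows "card (CN H a b) \<le> 3 * t - 3"
proof (rule ccontr)
  assume "\<not> ?thesis"
  hence cY: "3 * t \<le> card (CN H a b) + 2" by simp
  define Y where "Y = CN H a b"
  have YV: "Y \<subseteq> V" using u3 unfolding Y_def CN_def uniform3_def by blast
  have finY: "finite Y" using YV u3 finite_subset unfolding uniform3_def by blast
  define P where "P z = {x. x \<noteq> a \<and> (\<exists>f\<in>H. a \<in> f \<and> z \<in> f \<and> x \<in> f \<and> b \<notin> f)}" for z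
  define Q where "Q z = {x. x \<noteq> b \<and> (\<exists>f\<in>H. b \<in> f \<and> z \<in> f \<and> x \<in> f \<and> a \<notin> f)}" for z
  have valP: "\<forall>y\<in>Y. P y - {y} \<noteq> {}"
  proof
    fix y assume "y \<in> Y"
    then obtain f where f: "f\<in>H" "a\<in>f" "y\<in>f" "b\<notin>f" unfolding Y_def CN_def by blast
    then obtain x where "x\<in>f" "x\<noteq>a" "x\<noteq>y" using three_other[of f a y] u3 unfolding uniform3_def by blast
    thus "P y - {y} \<noteq> {}" unfolding P_def using f by blast
  qed
  have valQ: "\<forall>y\<in>Y. Q y - {y} \<noteq> {}"
  proof
    fix y assume "y \<in> Y"
    then obtain f where f: "f\<in>H" "b\<in>f" "y\<in>f" "a\<notin>f" unfolding Y_def CN_def by blast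
    then obtain x where "x\<in>f" "x\<noteq>b" "x\<noteq>y" using three_other[of f b y] u3 unfolding uniform3_def by blast
    thus "Q y - {y} \<noteq> {}" unfolding Q_def using f by blast
  qed
  have Yna: "\<forall>y\<in>Y. y \<noteq> a \<and> y \<noteq> b" unfolding Y_def CN_def by simp
  have symP: "\<forall>y\<in>Y. \<forall>z\<in>Y. z \<in> P y \<longleftrightarrow> y \<in> P z"
  proof (intro ballI)
    fix y z assume "y \<in> Y" "z \<in> Y"
    hence "y \<noteq> a" "z \<noteq> a" using Yna by auto
    thus "z \<in> P y \<longleftrightarrow> y \<in> P z" unfolding P_def by auto
  qed
  have symQ: "\<forall>y\<in>Y. \<forall>z\<in>Y. z \<in> Q y \<longleftrightarrow> y \<in> Q z"
  proof (intro ballI)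
    fix y z assume "y \<in> Y" "z \<in> Y"
    hence "y \<noteq> b" "z \<noteq> b" using Yna by auto
    thus "z \<in> Q y \<longleftrightarrow> y \<in> Q z" unfolding Q_def by auto
  qed
  obtain S where S: "S \<subseteq> Y" "card S = t" "\<forall>s\<in>S. P s - S \<noteq> {} \<and> Q s - S \<noteq> {}"
    using select[OF finY valP symP valQ symQ] cY unfolding Y_def by blast
  have finS: "finite S" using S(1) finY finite_subset by blast
  have "Y \<noteq> {}" using cY t1 unfolding Y_def by auto
  then obtain y0 where "y0 \<in> Y" by blast
  then obtain f0 g0 where "f0\<in>H" "a\<in>f0" "g0\<in>H" "b\<in>g0" unfolding Y_def CN_def by blast
  hence aV: "a\<in>V" and bV: "b\<in>V" using u3 unfolding uniform3_def by auto
  have aS: "a \<notin> S" and bS: "b\<notin>S" using S(1) unfolding Y_def CN_def by auto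
  have FA: "\<forall>s\<in>S. \<exists>f\<in>H. f \<inter> ({a,b} \<union> S) = {a,s}"
  proof
    fix s assume s: "s \<in> S"
    then obtain x where x: "x \<in> P s" "x \<notin> S" using S(3) by blast
    then obtain f where f: "f\<in>H" "a \<in> f" "s \<in> f" "x \<in> f" "b \<notin> f" "x \<noteq> a" unfolding P_def by blast
    have sa: "s \<noteq> a" using s aS by auto
    have "f = {a,s,x}" using three_eq[of f a s x] f sa x s u3 unfolding uniform3_def by auto
    thus "\<exists>f\<in>H. f \<inter> ({a,b} \<union> S) = {a,s}" using f x s ab by (intro bexI[of _ f]) auto
  qed
  have FB: "\<forall>s\<in>S. \<exists>f\<in>H. f \<inter> ({a,b} \<union> S) = {b,s}"
  proof
    fix s assume s: "s \<in> S"
    then obtain x where x: "x \<in> Q s" "x \<notin> S" using S(3) by blast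
    then obtain f where f: "f\<in>H" "b \<in> f" "s \<in> f" "x \<in> f" "a \<notin> f" "x \<noteq> b" unfolding Q_def by blast
    have sb: "s \<noteq> b" using s bS by auto
    have "f = {b,s,x}" using three_eq[of f b s x] f sb x s u3 unfolding uniform3_def by auto
    thus "\<exists>f\<in>H. f \<inter> ({a,b} \<union> S) = {b,s}" using f x s ab by (intro bexI[of _ f]) auto
  qed
  have "contains_trace V H (K2t_verts t) (K2t_edges t)"
    by (rule build_trace[OF u3 ab aV bV finS _ S(2) aS bS FA FB]) (use S(1) YV in auto)
  with nt show False by simp
qed

lemma B_other:
  assumes u3: "uniform3 V H" and e: "e \<in> edgesB H" and x: "x \<in> e" and y: "y \<in> e" and xy: "x \<noteq> y"
  shows "\<exists>f\<in>H. f \<noteq> e \<and> x \<in> f \<and> y \<in> f"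
proof (rule ccontr)
  assume nf: "\<not> ?thesis"
  have eH: "e \<in> H" and nA: "e \<notin> edgesA H" using e unfolding edgesB_def by auto
  have "{f\<in>H. {x,y} \<subseteq> f} = {e}" using nf eH x y by blast
  hence "codegree H x y = 1" unfolding codegree_def by simp
  hence "e \<in> edgesA H" unfolding edgesA_def using eH x y xy by blast
  thus False using nA by simp
qed

lemma third_in_CN:
  assumes u3: "uniform3 V H" and e: "e \<in> edgesB H" and ae: "a \<in> e" and we: "w \<in> e" and xe: "x \<in> e"
    and aw: "a \<noteq> w" and ax: "a \<noteq> x" and wx: "w \<noteq> x"
  shows "x \<in> CN H a w"
proof -
  have eH: "e \<in> H" using e unfolding edgesB_def by auto
  have ce: "card e = 3" using u3 eH unfolding uniform3_def by auto
  have e3: "e = {a,w,x}" using three_eq[OF ce ae we xe aw ax wx] .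
  obtain f where f: "f\<in>H" "f \<noteq> e" "a \<in> f" "x \<in> f" using B_other[OF u3 e ae xe ax] by blast
  have cf: "card f = 3" using u3 f(1) unfolding uniform3_def by auto
  have "w \<notin> f"
  proof
    assume "w \<in> f"
    have "f = {a,w,x}" using three_eq[OF cf f(3) \<open>w\<in>f\<close> f(4) aw ax wx] .
    thus False using f(2) e3 by simp
  qed
  obtain g where g: "g\<in>H" "g \<noteq> e" "w \<in> g" "x \<in> g" using B_other[OF u3 e we xe wx] by blast
  have cg: "card g = 3" using u3 g(1) unfolding uniform3_def by auto
  have "a \<notin> g"
  proof
    assume "a \<in> g"
    have "g = {a,w,x}" using three_eq[OF cg \<open>a\<in>g\<close> g(3) g(4) aw ax wx] .
    thus False using g(2) e3 by simp
  qed
  have "\<exists>f\<in>H. a \<in> f \<and> x \<in> f \<and> w \<notin> f" using f \<open>w\<notin>f\<close> by blast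
  moreover have "\<exists>g\<in>H. w \<in> g \<and> x \<in> g \<and> a \<notin> g" using g \<open>a\<notin>g\<close> by blast
  ultimately show ?thesis unfolding CN_def using ax wx by blast
qed
lemma card_pair_edges:
  assumes u3: "uniform3 V H" and aw: "a \<noteq> w" and F: "F \<subseteq> {e\<in>H. a\<in>e \<and> w\<in>e}"
    and T: "\<forall>e\<in>F. \<forall>x\<in>e - {a,w}. x \<in> T" and finT: "finite T"
  shows "card F \<le> card T"
proof -
  have one: "\<exists>x. e - {a,w} = {x}" if "e \<in> F" for e
  proof -
    have "card e = 3" "a\<in>e" "w\<in>e" using that F u3 unfolding uniform3_def by auto
    then obtain x where x: "x\<in>e" "x\<noteq>a" "x\<noteq>w" using three_other by metis
    have "e = {a,w,x}" using three_eq[of e a w x] x \<open>card e = 3\<close> \<open>a\<in>e\<close> \<open>w\<in>e\<close> aw by auto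
    thus ?thesis using x by auto
  qed
  define h where "h e = the_elem (e - {a,w})" for e
  have he: "e = {a,w,h e} \<and> h e \<in> e - {a,w}" if eF: "e \<in> F" for e
  proof -
    obtain x where x: "e - {a,w} = {x}" using one[OF eF] by blast
    have "a \<in> e" "w \<in> e" using eF F by auto
    then show ?thesis using x unfolding h_def by auto
  qed
  have "inj_on h F"
  proof (rule inj_onI)
    fix e e' assume "e\<in>F" "e'\<in>F" "h e = h e'"
    have E1: "e = {a,w,h e}" and E2: "e' = {a,w,h e'}" using he \<open>e\<in>F\<close> \<open>e'\<in>F\<close> by auto
    have X: "{a,w,h e} = {a,w,h e'}" using \<open>h e = h e'\<close> by simp
    show "e = e'" by (rule trans[OF E1 trans[OF X E2[symmetric]]])
  qed
  moreover have "h ` F \<subseteq> T"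
  proof
    fix y assume "y \<in> h ` F"
    then obtain e where e: "e \<in> F" "y = h e" by blast
    hence "h e \<in> e - {a,w}" using he by blast
    thus "y \<in> T" using T e by blast
  qed
  ultimately show ?thesis using card_inj_on_le finT by blast
qed




theorem mainTheorem7:
  fixes V :: "'a set" and H :: "'a set set" and t :: nat and v :: 'a
  assumes "t \<ge> 3"
    and "uniform3 V H"
    and "\<not> contains_trace V H (K2t_verts t) (K2t_edges t)"
    and "v \<in> V"
  shows "\<forall>u\<in>N1 H v. real (card (Vu H v u)) \<ge>
           2 / (3 * real t - 3) *
           (real (degB H u) - (3 * real t - 3) - 3 * (real t - 1)^2 * (6 * real t - 2))"
proof
  fix u assume uN: "u \<in> N1 H v"
  note u3 = assms(2) and nt = assms(3)
  have t1: "1 \<le> t" using assms(1) by simp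
  define T where "T = 3 * t - 3"
  have CNb: "\<And>a b. a \<noteq> b \<Longrightarrow> card (CN H a b) \<le> T"
    unfolding T_def using CN_bound[OF u3 nt _ t1] by blast
  have finV: "finite V" using u3 unfolding uniform3_def by simp
  have HV: "H \<subseteq> Pow V" using u3 unfolding uniform3_def by auto
  have finH: "finite H" using HV finV by (meson finite_Pow_iff finite_subset)
  have BH: "edgesB H \<subseteq> H" unfolding edgesB_def by auto
  have finB: "finite (edgesB H)" using BH finH finite_subset by blast
  have card3: "\<And>e. e \<in> edgesB H \<Longrightarrow> card e = 3" using BH u3 unfolding uniform3_def by auto
  have uv: "u \<noteq> v" using uN unfolding N1_def by simp
  define E where "E = Eu H v u"
  have EB: "E \<subseteq> edgesB H" unfolding E_def Eu_def by auto
  have finE: "finite E" using EB BH finH finite_subset by blast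
  define VV where "VV = Vu H v u"
  have VVV: "VV \<subseteq> V"
  proof
    fix x assume "x \<in> VV"
    then obtain e where "e \<in> edgesB H" "x \<in> e" unfolding VV_def Vu_def N2_def by blast
    thus "x \<in> V" using BH HV by blast
  qed
  have finVV: "finite VV" using VVV finV finite_subset by blast
  have VVu: "\<And>w. w \<in> VV \<Longrightarrow> w \<noteq> u"
  proof -
    fix w assume "w \<in> VV"
    hence "w \<notin> N1 H v" unfolding VV_def Vu_def N2_def by blast
    thus "w \<noteq> u" using uN by blast
  qed
  have finCN: "finite (CN H a b)" for a b
  proof (rule finite_subset[OF _ finV])
    show "CN H a b \<subseteq> V"
    proof
      fix z assume "z \<in> CN H a b"
      then obtain f where "f \<in> H" "z \<in> f" unfolding CN_def by blast
      thus "z \<in> V" using HV by blast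
    qed
  qed
  have inVV: "x \<in> VV" if eE: "e \<in> E" and xe: "x \<in> e" and xu: "x \<noteq> u" for e x
  proof -
    have eB: "e \<in> edgesB H" and eN: "e \<inter> N1 H v = {u}" using eE unfolding E_def Eu_def by auto
    have ue: "u \<in> e" using eN by auto
    have xN: "x \<notin> N1 H v" using eN xe xu by auto
    have ve: "v \<notin> e"
    proof
      assume ve: "v \<in> e"
      obtain y where y: "y \<in> e" "y \<noteq> u" "y \<noteq> v" using three_other[OF card3[OF eB] ue ve] by blast
      have "y \<in> N1 H v" unfolding N1_def using y eB ve by auto
      thus False using eN y by auto
    qed
    have xv: "x \<noteq> v" using ve xe by auto
    have "x \<in> N2 H v" unfolding N2_def using xN xv eB xe eN by auto
    thus ?thesis unfolding VV_def Vu_def using eE xe unfolding E_def by auto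
  qed
  have Eprop: "\<And>e. e \<in> E \<Longrightarrow> u \<in> e" unfolding E_def Eu_def by auto
  have perw: "card {e\<in>E. w \<in> e} \<le> T" if wV: "w \<in> VV" for w
  proof -
    have uw: "u \<noteq> w" using VVu[OF wV] by simp
    have "card {e\<in>E. w \<in> e} \<le> card (CN H u w)"
    proof (rule card_pair_edges[OF u3 uw])
      show "{e\<in>E. w \<in> e} \<subseteq> {e\<in>H. u\<in>e \<and> w\<in>e}" using EB BH Eprop by auto
      show "\<forall>e\<in>{e\<in>E. w \<in> e}. \<forall>x\<in>e - {u,w}. x \<in> CN H u w"
      proof (intro ballI)
        fix e x assume e: "e \<in> {e\<in>E. w \<in> e}" and x: "x \<in> e - {u,w}"
        have eB: "e \<in> edgesB H" and ue: "u \<in> e" and we: "w \<in> e" using e EB Eprop by auto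
        show "x \<in> CN H u w"
          using third_in_CN[OF u3 eB ue we, of x] x uw by blast
      qed
      show "finite (CN H u w)" by (rule finCN)
    qed
    thus ?thesis using CNb[OF uw] by linarith
  qed
  have dc: "2 * card E \<le> T * card VV"
  proof -
    have ce: "card {w\<in>VV. w \<in> e} = 2" if eE: "e \<in> E" for e
    proof -
      have "{w\<in>VV. w \<in> e} = e - {u}" using inVV[OF eE] VVu by auto
      moreover have "card e = 3" using card3 EB eE by blast
      hence "card (e - {u}) = 2" using Eprop[OF eE] by (simp add: card_Diff_singleton)
      ultimately show ?thesis by simp
    qed
    have "2 * card E = (\<Sum>e\<in>E. card {w\<in>VV. w \<in> e})" using ce by simp
    also have "\<dots> = (\<Sum>e\<in>E. \<Sum>w\<in>VV. if w \<in> e then 1 else 0)"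
      by (intro sum.cong refl) (simp add: sum.inter_filter[OF finVV, symmetric])
    also have "\<dots> = (\<Sum>w\<in>VV. \<Sum>e\<in>E. if w \<in> e then 1 else 0)" by (rule sum.swap)
    also have "\<dots> = (\<Sum>w\<in>VV. card {e\<in>E. w \<in> e})"
      by (intro sum.cong refl) (simp add: sum.inter_filter[OF finE, symmetric])
    also have "\<dots> \<le> (\<Sum>w\<in>VV. T)" by (rule sum_mono) (rule perw)
    also have "\<dots> = T * card VV" by simp
    finally show ?thesis .
  qed
  define X2 where "X2 = {e\<in>edgesB H. u \<in> e \<and> v \<in> e}"
  have cX2: "card X2 \<le> T"
  proof -
    have "card X2 \<le> card (CN H u v)"
    proof (rule card_pair_edges[OF u3 uv])
      show "X2 \<subseteq> {e\<in>H. u\<in>e \<and> v\<in>e}" using BH unfolding X2_def by auto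
      show "\<forall>e\<in>X2. \<forall>x\<in>e - {u,v}. x \<in> CN H u v"
      proof (intro ballI)
        fix e x assume e: "e \<in> X2" and x: "x \<in> e - {u,v}"
        have eB: "e \<in> edgesB H" and ue: "u \<in> e" and ve: "v \<in> e" using e unfolding X2_def by auto
        show "x \<in> CN H u v" using third_in_CN[OF u3 eB ue ve, of x] x uv by blast
      qed
      show "finite (CN H u v)" by (rule finCN)
    qed
    thus ?thesis using CNb[OF uv] by linarith
  qed
  define X3 where "X3 = {e\<in>edgesB H. u \<in> e \<and> v \<notin> e \<and> e \<inter> N1 H v \<noteq> {u}}"
  have X3sub: "X3 \<subseteq> (\<Union>z\<in>CN H u v. {e\<in>edgesB H. u \<in> e \<and> z \<in> e})"
  proof
    fix e assume e: "e \<in> X3"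
    hence eB: "e \<in> edgesB H" and ue: "u \<in> e" and ve: "v \<notin> e" and ne: "e \<inter> N1 H v \<noteq> {u}"
      unfolding X3_def by auto
    obtain z where z: "z \<in> e" "z \<in> N1 H v" "z \<noteq> u" using ne ue uN by blast
    have zv: "z \<noteq> v" using z(2) unfolding N1_def by simp
    obtain e' where e': "e' \<in> edgesB H" "v \<in> e'" "z \<in> e'" using z(2) unfolding N1_def by auto
    have "z \<in> CN H u v"
    proof (cases "u \<in> e'")
      case True
      have "z \<in> CN H v u" using third_in_CN[OF u3 e'(1) e'(2) True e'(3)] uv zv z(3) by auto
      thus ?thesis using CN_sym by metis
    next
      case False
      have "e \<in> H" "e' \<in> H" using eB e' BH by auto
      thus ?thesis unfolding CN_def using z(1,3) zv ue ve e' False by blast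
    qed
    thus "e \<in> (\<Union>z\<in>CN H u v. {e\<in>edgesB H. u \<in> e \<and> z \<in> e})" using eB ue z(1) by blast
  qed
  have cX3: "card X3 \<le> T * T"
  proof -
    have "card X3 \<le> card (\<Union>z\<in>CN H u v. {e\<in>edgesB H. u \<in> e \<and> z \<in> e})"
      by (rule card_mono[OF _ X3sub]) (use finB finCN in simp)
    also have "\<dots> \<le> (\<Sum>z\<in>CN H u v. card {e\<in>edgesB H. u \<in> e \<and> z \<in> e})"
      by (rule card_UN_le[OF finCN])
    also have "\<dots> \<le> (\<Sum>z\<in>CN H u v. T)"
    proof (rule sum_mono)
      fix z assume z: "z \<in> CN H u v"
      hence uz: "u \<noteq> z" unfolding CN_def by auto
      have "card {e\<in>edgesB H. u \<in> e \<and> z \<in> e} \<le> card (CN H u z)"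
      proof (rule card_pair_edges[OF u3 uz])
        show "{e\<in>edgesB H. u \<in> e \<and> z \<in> e} \<subseteq> {e\<in>H. u\<in>e \<and> z\<in>e}" using BH by auto
        show "\<forall>e\<in>{e\<in>edgesB H. u \<in> e \<and> z \<in> e}. \<forall>x\<in>e - {u,z}. x \<in> CN H u z"
        proof (intro ballI)
          fix e x assume e: "e \<in> {e\<in>edgesB H. u \<in> e \<and> z \<in> e}" and x: "x \<in> e - {u,z}"
          have eB: "e \<in> edgesB H" and ue: "u \<in> e" and ze: "z \<in> e" using e by auto
          show "x \<in> CN H u z" using third_in_CN[OF u3 eB ue ze, of x] x uz by blast
        qed
        show "finite (CN H u z)" by (rule finCN)
      qed
      thus "card {e\<in>edgesB H. u \<in> e \<and> z \<in> e} \<le> T" using CNb[OF uz] by linarith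
    qed
    also have "\<dots> = card (CN H u v) * T" by simp
    also have "\<dots> \<le> T * T" using CNb[OF uv] by simp
    finally show ?thesis .
  qed
  have dsub: "{e\<in>edgesB H. u \<in> e} \<subseteq> E \<union> X2 \<union> X3"
  proof
    fix e assume e: "e \<in> {e\<in>edgesB H. u \<in> e}"
    show "e \<in> E \<union> X2 \<union> X3"
    proof (cases "e \<inter> N1 H v = {u}")
      case True
      then show ?thesis using e unfolding E_def Eu_def by blast
    next
      case False
      then show ?thesis using e unfolding X2_def X3_def by blast
    qed
  qed
  have "degB H u \<le> card (E \<union> X2 \<union> X3)"
    unfolding degB_def by (rule card_mono[OF _ dsub]) (use finE finB in \<open>simp add: X2_def X3_def\<close>)
  also have "\<dots> \<le> card E + card X2 + card X3" by (meson card_Un_le add_le_mono1 le_trans)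
  finally have dB: "degB H u \<le> card E + T + T * T" using cX2 cX3 by linarith
  have Tr: "real T = 3 * real t - 3" unfolding T_def using t1 by (simp add: of_nat_diff)
  have Tpos: "real T > 0" using Tr assms(1) by simp
  have dBr: "real (degB H u) \<le> real (card E) + real T + real T * real T" using dB
    by (metis of_nat_add of_nat_le_iff of_nat_mult)
  have dcr: "2 * real (card E) \<le> real T * real (card VV)" using dc
    by (metis of_nat_le_iff of_nat_mult of_nat_numeral)
  have TT: "real T * real T \<le> 3 * (real t - 1)^2 * (6 * real t - 2)"
  proof -
    have "real T * real T = 9 * (real t - 1)^2" unfolding Tr by (simp add: power2_eq_square algebra_simps)
    also have "\<dots> \<le> 3 * (real t - 1)^2 * (6 * real t - 2)" using assms(1) by (simp add: mult_right_mono)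
    finally show ?thesis .
  qed
  have "real (degB H u) - (3 * real t - 3) - 3 * (real t - 1)^2 * (6 * real t - 2) \<le> real (card E)"
    using dBr TT Tr by linarith
  note key = this
  have "2 / (3 * real t - 3) * (real (degB H u) - (3 * real t - 3) - 3 * (real t - 1)^2 * (6 * real t - 2))
     \<le> 2 / (3 * real t - 3) * real (card E)"
    by (rule mult_left_mono[OF key]) (use Tr Tpos in simp)
  also have "\<dots> \<le> real (card VV)" unfolding Tr[symmetric] using dcr Tpos by (simp add: field_simps)
  finally show "real (card (Vu H v u)) \<ge> 2 / (3 * real t - 3) *
           (real (degB H u) - (3 * real t - 3) - 3 * (real t - 1)^2 * (6 * real t - 2))"
    unfolding VV_def .
qed


end
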